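(* Let $\mathcal C\subseteq\{0,1\}^n$ and $\mathcal D\subseteq\{0,1\}^m$ be neural codes, $\phi:R_\mathcal D\to R_\mathcal C$ a ring homomorphism, and $\tau:R[m]\to R[n]$ a ring homomorphism. Then $\tau$ is compatible with $\phi$ if and only if $q_\phi=q_\tau|_\mathcal C$, where $q_\tau:\{0,1\}^n\to\{0,1\}^m$ and $q_\phi:\mathcal C\to\mathcal D$ are the associated code maps.
   Context: For a code $\mathcal C\subseteq\{0,1\}^n$, $R_\mathcal C$ is the ring of all functions $\mathcal C\to\mathbb F_2$ (equivalently $\mathbb F_2[x_1,\dots,x_n]$ modulo the ideal of polynomials vanishing on $\mathcal C$); $R[n]=R_{\{0,1\}^n}$. $R_\mathcal C$ is an $R[n]$-module via $(r\cdot f)(c)=r(c)f(c)$. $\rho_d$ denotes the indicator function of $\{d\}$. For any ring homomorphism $\psi:R_\mathcal B\to R_\mathcal A$ between neural rings and any $a\in\mathcal A$ there is a unique $b\in\mathcal B$ with $\psi(\rho_b)(a)=1$; the associated code map $q_\psi:\mathcal A\to\mathcal B$ sends $a$ to this $b$ (this applies in particular to $\tau:R[m]\to R[n]$ with $\mathcal A=\{0,1\}^n$, $\mathcal B=\{0,1\}^m$). A ring homomorphism $\tau:R[m]\to R[n]$ is compatible with $\phi$ if $\phi(r\cdot f)=\tau(r)\cdot\phi(f)$ for all $r\in R[m]$ and $f\in R_\mathcal D$. *)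

theory Defs
  imports "HOL-Algebra.Ring" "HOL-Algebra.RingHom"
begin

text \<open>Codewords in {0,1}^n are boolean lists of length n; F_2 is modelled by bool
  (addition = xor, multiplication = conjunction).\<close>

definition cube :: "nat \<Rightarrow> bool list set" where
  "cube n = {xs. length xs = n}"

text \<open>The neural ring R_C: all functions C \<rightarrow> F_2, represented extensionally
  (value False outside C).\<close>
definition neural_ring :: "bool list set \<Rightarrow> (bool list \<Rightarrow> bool) ring" where
  "neural_ring C = \<lparr> carrier = {f. \<forall>x. x \<notin> C \<longrightarrow> f x = False},
                     mult = (\<lambda>f g x. f x \<and> g x),
                     one = (\<lambda>x. x \<in> C),
                     zero = (\<lambda>x. False),
                     add = (\<lambda>f g x. f x \<noteq> g x) \<rparr>"

definition rho :: "bool list \<Rightarrow> bool list \<Rightarrow> bool" where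
  "rho d = (\<lambda>x. x = d)"

definition code_map ::
  "bool list set \<Rightarrow> bool list set \<Rightarrow> ((bool list \<Rightarrow> bool) \<Rightarrow> (bool list \<Rightarrow> bool))
     \<Rightarrow> bool list \<Rightarrow> bool list" where
  "code_map A B psi a = (THE b. b \<in> B \<and> psi (rho b) a)"

definition module_act :: "(bool list \<Rightarrow> bool) \<Rightarrow> (bool list \<Rightarrow> bool) \<Rightarrow> bool list \<Rightarrow> bool" where
  "module_act r f = (\<lambda>c. r c \<and> f c)"

definition compatible ::
  "nat \<Rightarrow> bool list set \<Rightarrow> ((bool list \<Rightarrow> bool) \<Rightarrow> (bool list \<Rightarrow> bool))
     \<Rightarrow> ((bool list \<Rightarrow> bool) \<Rightarrow> (bool list \<Rightarrow> bool)) \<Rightarrow> bool" where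
  "compatible m D tau phi \<longleftrightarrow>
     (\<forall>r \<in> carrier (neural_ring (cube m)). \<forall>f \<in> carrier (neural_ring D).
        phi (module_act r f) = module_act (tau r) (phi f))"

end

theory Submission
  imports Defs
begin

lemma nr_simps:
  "carrier (neural_ring C) = {f. \<forall>x. x \<notin> C \<longrightarrow> f x = False}"
  "mult (neural_ring C) = (\<lambda>f g x. f x \<and> g x)"
  "one (neural_ring C) = (\<lambda>x. x \<in> C)"
  "zero (neural_ring C) = (\<lambda>x. False)"
  "add (neural_ring C) = (\<lambda>f g x. f x \<noteq> g x)"
  by (simp_all add: neural_ring_def)

lemma hom_basic:
  assumes h: "psi \<in> ring_hom (neural_ring B) (neural_ring A)"
  shows hom_zero: "psi (\<lambda>x. False) = (\<lambda>x. False)"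
    and hom_mult: "\<And>f g. f \<in> carrier (neural_ring B) \<Longrightarrow> g \<in> carrier (neural_ring B) \<Longrightarrow>
            psi (\<lambda>x. f x \<and> g x) = (\<lambda>x. psi f x \<and> psi g x)"
    and hom_add: "\<And>f g. f \<in> carrier (neural_ring B) \<Longrightarrow> g \<in> carrier (neural_ring B) \<Longrightarrow>
            psi (\<lambda>x. f x \<noteq> g x) = (\<lambda>x. psi f x \<noteq> psi g x)"
    and hom_one: "psi (\<lambda>x. x \<in> B) = (\<lambda>x. x \<in> A)"
    and hom_closed: "\<And>f. f \<in> carrier (neural_ring B) \<Longrightarrow> \<forall>x. x \<notin> A \<longrightarrow> psi f x = False"
proof -
  show add: "\<And>f g. f \<in> carrier (neural_ring B) \<Longrightarrow> g \<in> carrier (neural_ring B) \<Longrightarrow>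
            psi (\<lambda>x. f x \<noteq> g x) = (\<lambda>x. psi f x \<noteq> psi g x)"
    using ring_hom_add[OF h] by (simp add: nr_simps)
  have z: "(\<lambda>x::bool list. False) \<in> carrier (neural_ring B)" by (simp add: nr_simps)
  from add[OF z z] show "psi (\<lambda>x. False) = (\<lambda>x. False)"
    by (metis (full_types))
  show "\<And>f g. f \<in> carrier (neural_ring B) \<Longrightarrow> g \<in> carrier (neural_ring B) \<Longrightarrow>
            psi (\<lambda>x. f x \<and> g x) = (\<lambda>x. psi f x \<and> psi g x)"
    using ring_hom_mult[OF h] by (simp add: nr_simps)
  show "psi (\<lambda>x. x \<in> B) = (\<lambda>x. x \<in> A)"
    using ring_hom_one[OF h] by (simp add: nr_simps)
  show "\<And>f. f \<in> carrier (neural_ring B) \<Longrightarrow> \<forall>x. x \<notin> A \<longrightarrow> psi f x = False"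
    using ring_hom_closed[OF h] by (simp add: nr_simps)
qed

lemma rho_carrier: "b \<in> B \<Longrightarrow> rho b \<in> carrier (neural_ring B)"
  by (auto simp: nr_simps rho_def)

lemma orth:
  assumes h: "psi \<in> ring_hom (neural_ring B) (neural_ring A)"
    and f: "f \<in> carrier (neural_ring B)" and b: "b \<in> B"
  shows "psi f a \<and> psi (rho b) a \<longleftrightarrow> f b \<and> psi (rho b) a"
proof -
  have "psi (\<lambda>x. f x \<and> rho b x) = (\<lambda>x. psi f x \<and> psi (rho b) x)"
    using hom_mult[OF h f rho_carrier[OF b]] .
  moreover have "(\<lambda>x. f x \<and> rho b x) = (if f b then rho b else (\<lambda>x. False))"
    by (auto simp: rho_def)
  ultimately show ?thesis using hom_zero[OF h]
    by (metis (full_types))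
qed

lemma exists_b:
  assumes h: "psi \<in> ring_hom (neural_ring B) (neural_ring A)"
    and fin: "finite S" and sub: "S \<subseteq> B"
  shows "psi (\<lambda>x. x \<in> S) a \<longleftrightarrow> (\<exists>b\<in>S. psi (rho b) a)"
  using fin sub
proof (induction S rule: finite_induct)
  case empty
  then show ?case using hom_zero[OF h] by simp
next
  case (insert b S)
  have cS: "(\<lambda>x. x \<in> S) \<in> carrier (neural_ring B)" using insert by (auto simp: nr_simps)
  have bB: "b \<in> B" using insert by auto
  have eq: "(\<lambda>x. x \<in> insert b S) = (\<lambda>x. (x \<in> S) \<noteq> rho b x)"
    using insert(2) by (auto simp: rho_def)
  have "psi (\<lambda>x. x \<in> insert b S) a = (psi (\<lambda>x. x \<in> S) a \<noteq> psi (rho b) a)"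
    unfolding eq using hom_add[OF h cS rho_carrier[OF bB]] by metis
  moreover have "\<not> (psi (\<lambda>x. x \<in> S) a \<and> psi (rho b) a)"
    using orth[OF h cS bB, of a] insert(2) by simp
  ultimately show ?case using insert by auto
qed

lemma hom_eval:
  assumes h: "psi \<in> ring_hom (neural_ring B) (neural_ring A)"
    and fin: "finite B" and a: "a \<in> A"
  shows "code_map A B psi a \<in> B \<and> psi (rho (code_map A B psi a)) a \<and>
         (\<forall>f \<in> carrier (neural_ring B). psi f a = f (code_map A B psi a))"
proof -
  have "psi (\<lambda>x. x \<in> B) a" using hom_one[OF h] a by simp
  then obtain b where b: "b \<in> B" "psi (rho b) a" using exists_b[OF h fin subset_refl] by auto
  have uniq: "b' = b" if "b' \<in> B" "psi (rho b') a" for b'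
    using orth[OF h rho_carrier[OF that(1)] b(1), of a] that b by (simp add: rho_def)
  have "code_map A B psi a = b"
    unfolding code_map_def using b uniq by blast
  moreover have "\<forall>f \<in> carrier (neural_ring B). psi f a = f b"
    using orth[OF h _ b(1), of _ a] b(2) by blast
  ultimately show ?thesis using b by simp
qed

lemma finite_cube: "finite (cube m)"
  unfolding cube_def using finite_lists_length_eq[of "UNIV::bool set" m] by simp

theorem corollary2:
  fixes n m :: nat and C D :: "bool list set"
    and phi tau :: "(bool list \<Rightarrow> bool) \<Rightarrow> (bool list \<Rightarrow> bool)"
  assumes "C \<subseteq> cube n" and "D \<subseteq> cube m"
    and "phi \<in> ring_hom (neural_ring D) (neural_ring C)"
    and "tau \<in> ring_hom (neural_ring (cube m)) (neural_ring (cube n))"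
  shows "compatible m D tau phi \<longleftrightarrow>
         (\<forall>c \<in> C. code_map C D phi c = code_map (cube n) (cube m) tau c)"
proof -
  have finD: "finite D" using assms(2) finite_cube finite_subset by blast
  note P = hom_eval[OF assms(3) finD]
  note T = hom_eval[OF assms(4) finite_cube]
  show ?thesis
  proof
    assume comp: "compatible m D tau phi"
    show "\<forall>c \<in> C. code_map C D phi c = code_map (cube n) (cube m) tau c"
    proof
      fix c assume c: "c \<in> C"
      hence cn: "c \<in> cube n" using assms(1) by auto
      let ?d = "code_map C D phi c"
      have dD: "?d \<in> D" using P[OF c] by simp
      have r: "rho ?d \<in> carrier (neural_ring (cube m))" using dD assms(2) rho_carrier by blast
      have one: "(\<lambda>x. x \<in> D) \<in> carrier (neural_ring D)" by (simp add: nr_simps)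
      have "phi (module_act (rho ?d) (\<lambda>x. x \<in> D)) = module_act (tau (rho ?d)) (phi (\<lambda>x. x \<in> D))"
        using comp r one unfolding compatible_def by blast
      hence "phi (module_act (rho ?d) (\<lambda>x. x \<in> D)) c = module_act (tau (rho ?d)) (phi (\<lambda>x. x \<in> D)) c"
        by simp
      moreover have "module_act (rho ?d) (\<lambda>x. x \<in> D) \<in> carrier (neural_ring D)"
        by (simp add: nr_simps module_act_def)
      ultimately have "tau (rho ?d) c"
        using P[OF c] dD by (simp add: module_act_def rho_def)
      hence "rho ?d (code_map (cube n) (cube m) tau c)"
        using T[OF cn] r by simp
      thus "?d = code_map (cube n) (cube m) tau c" by (simp add: rho_def)
    qed
  next
    assume eq: "\<forall>c \<in> C. code_map C D phi c = code_map (cube n) (cube m) tau c"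
    show "compatible m D tau phi"
      unfolding compatible_def
    proof (intro ballI ext)
      fix r f x
      assume r: "r \<in> carrier (neural_ring (cube m))" and f: "f \<in> carrier (neural_ring D)"
      have rf: "module_act r f \<in> carrier (neural_ring D)"
        using f by (simp add: nr_simps module_act_def)
      show "phi (module_act r f) x = module_act (tau r) (phi f) x"
      proof (cases "x \<in> C")
        case True
        hence cn: "x \<in> cube n" using assms(1) by auto
        show ?thesis using P[OF True] T[OF cn] rf r f eq True
          by (simp add: module_act_def)
      next
        case False
        then show ?thesis using hom_closed[OF assms(3) rf] hom_closed[OF assms(3) f]
          by (simp add: module_act_def)
      qed
    qed
  qed
qed

end
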